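(* Assume the setting in the context, with $\epsilon \in (0,1)$, $\delta = \bigl(1 + \frac{k+3}{2\epsilon}\bigr)^{-1}$, $S_{\mathrm{init}} = \{e^*\}$ with $e^* \in \arg\max_{e \in \mathcal{G}} f(\{e\})$, $f(S_{\mathrm{init}})>0$, and $\alpha = f(S_{\mathrm{init}})\delta/n$. Consider any sequence of improvement steps starting from $S_0 = S_{\mathrm{init}}$ and an arbitrary total order $\prec_0$, where step $j$ picks a $k$-replacement $(A,B)$ for $S_j$ with $\sum_{a \in A} w_{(A,B)}(a)^2 > \sum_{b \in B} w(b)^2$ (weights computed for $S_j$ with respect to $\prec_j$), sets $S_{j+1} = (S_j \setminus B) \cup A$, and sets $\prec_{j+1}$ to be an order in which all elements of $S_j \setminus B$ precede all elements of $A$ and which agrees with $\prec_j$ within $S_j\setminus B$ and within $A$. Then the number of improvement steps is at most $n^3\delta^{-2} = n^3\bigl(1 + \frac{k+3}{2\epsilon}\bigr)^2$; in particular, for fixed $k$, it is $O(n^3\epsilon^{-2})$.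
   Context: Setting. $\mathcal{G}$ is a finite ground set with $|\mathcal{G}| = n$, $f : 2^{\mathcal{G}} \to \mathbb{R}_{\ge 0}$ is a nonnegative monotone submodular function, and $\mathcal{I} \subseteq 2^{\mathcal{G}}$ is a nonempty downward-closed family containing all singletons; $k\ge 1$ is an integer. Weights. For $S \in \mathcal{I}$ and a total order $\prec$, with $S = \{s_1 \prec \dots \prec s_m\}$ and $S_i = \{s_1,\dots,s_i\}$, define $w(s_i) = \lfloor (f(S_{i-1} \cup \{s_i\}) - f(S_{i-1}))/\alpha \rfloor \alpha$. A $k$-replacement for $S$ is a pair $(A,B)$ with $B \subseteq S$, $A \subseteq \mathcal{G} \setminus (S \setminus B)$, $|A| \le k$, $|B| \le k^2 - k + 1$, and $(S \setminus B) \cup A \in \mathcal{I}$. For such a pair, write $A = \{a_1 \prec \dots \prec a_r\}$, $A_i = \{a_1,\dots,a_i\}$, and define $w_{(A,B)}(a_i) = \lfloor (f((S\setminus B) \cup A_{i-1} \cup \{a_i\}) - f((S\setminus B)\cup A_{i-1}))/\alpha \rfloor \alpha$. *)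

theory Defs
  imports Main Complex_Main
begin

definition monotone_set_fun :: "'a set \<Rightarrow> ('a set \<Rightarrow> real) \<Rightarrow> bool" where
  "monotone_set_fun G f \<longleftrightarrow> (\<forall>X Y. X \<subseteq> Y \<and> Y \<subseteq> G \<longrightarrow> f X \<le> f Y)"

definition submodular :: "'a set \<Rightarrow> ('a set \<Rightarrow> real) \<Rightarrow> bool" where
  "submodular G f \<longleftrightarrow> (\<forall>X Y x. X \<subseteq> Y \<and> Y \<subseteq> G \<and> x \<in> G - Y \<longrightarrow>
      f (insert x Y) - f Y \<le> f (insert x X) - f X)"

definition down_closed :: "'a set set \<Rightarrow> bool" where
  "down_closed \<I> \<longleftrightarrow> (\<forall>X Y. Y \<in> \<I> \<and> X \<subseteq> Y \<longrightarrow> X \<in> \<I>)"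

definition pred_in :: "'a rel \<Rightarrow> 'a set \<Rightarrow> 'a \<Rightarrow> 'a set" where
  "pred_in r S s = {t \<in> S. (t, s) \<in> r \<and> t \<noteq> s}"

definition wt :: "('a set \<Rightarrow> real) \<Rightarrow> real \<Rightarrow> 'a rel \<Rightarrow> 'a set \<Rightarrow> 'a \<Rightarrow> real" where
  "wt f \<alpha> r S s = of_int \<lfloor>(f (insert s (pred_in r S s)) - f (pred_in r S s)) / \<alpha>\<rfloor> * \<alpha>"

definition wt_repl :: "('a set \<Rightarrow> real) \<Rightarrow> real \<Rightarrow> 'a rel \<Rightarrow> 'a set \<Rightarrow> 'a set \<Rightarrow> 'a set \<Rightarrow> 'a \<Rightarrow> real" where
  "wt_repl f \<alpha> r S A B a =
     of_int \<lfloor>(f (insert a ((S - B) \<union> pred_in r A a)) - f ((S - B) \<union> pred_in r A a)) / \<alpha>\<rfloor> * \<alpha>"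

definition k_replacement :: "'a set \<Rightarrow> 'a set set \<Rightarrow> nat \<Rightarrow> 'a set \<Rightarrow> 'a set \<Rightarrow> 'a set \<Rightarrow> bool" where
  "k_replacement G \<I> k S A B \<longleftrightarrow>
     B \<subseteq> S \<and> A \<subseteq> G - (S - B) \<and> card A \<le> k \<and> card B \<le> k^2 - k + 1 \<and> (S - B) \<union> A \<in> \<I>"

end

theory Submission
  imports Defs
begin

lemma pred_sub: "pred_in r T s \<subseteq> T" and pred_notin: "s \<notin> pred_in r T s"
  by (auto simp: pred_in_def)

lemma floor_sq_mono:
  fixes x y a :: real
  assumes "0 \<le> x" "x \<le> y" "0 < a"
  shows "(\<lfloor>x / a\<rfloor>)^2 \<le> (\<lfloor>y / a\<rfloor>)^2"
proof -
  have "x / a \<le> y / a" using assms by (simp add: divide_right_mono)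
  hence h: "\<lfloor>x / a\<rfloor> \<le> \<lfloor>y / a\<rfloor>" by (rule floor_mono)
  have "0 \<le> \<lfloor>x / a\<rfloor>" using assms by simp
  with h show ?thesis by (simp add: power_mono)
qed

theorem mainTheorem5:
  fixes G :: "'a set" and f :: "'a set \<Rightarrow> real" and \<I> :: "'a set set" and k n :: nat
    and \<epsilon> \<delta> \<alpha> :: real and estar :: 'a
    and S A B :: "nat \<Rightarrow> 'a set" and ord :: "nat \<Rightarrow> 'a rel" and m :: nat
  assumes finG: "finite G" and cardG: "card G = n"
    and f_nonneg: "\<forall>X. X \<subseteq> G \<longrightarrow> f X \<ge> 0"
    and f_mono: "monotone_set_fun G f" and f_sub: "submodular G f"
    and I_sub: "\<I> \<subseteq> Pow G" and I_ne: "\<I> \<noteq> {}" and I_down: "down_closed \<I>"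
    and I_single: "\<forall>e\<in>G. {e} \<in> \<I>"
    and k_pos: "k \<ge> 1"
    and eps: "0 < \<epsilon>" "\<epsilon> < 1"
    and delta_def: "\<delta> = 1 / (1 + (real k + 3) / (2 * \<epsilon>))"
    and estar_in: "estar \<in> G" and estar_max: "\<forall>e\<in>G. f {e} \<le> f {estar}"
    and f_init_pos: "f {estar} > 0"
    and alpha_def: "\<alpha> = f {estar} * \<delta> / real n"
    and S0: "S 0 = {estar}"
    and ord0: "linear_order_on G (ord 0)"
    and steps: "\<forall>j<m.
        k_replacement G \<I> k (S j) (A j) (B j)
      \<and> (\<Sum>a\<in>A j. (wt_repl f \<alpha> (ord j) (S j) (A j) (B j) a)^2)
          > (\<Sum>b\<in>B j. (wt f \<alpha> (ord j) (S j) b)^2)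
      \<and> S (Suc j) = (S j - B j) \<union> A j
      \<and> linear_order_on G (ord (Suc j))
      \<and> (\<forall>x\<in>S j - B j. \<forall>y\<in>A j. (x, y) \<in> ord (Suc j))
      \<and> (\<forall>x\<in>S j - B j. \<forall>y\<in>S j - B j. (x, y) \<in> ord (Suc j) \<longleftrightarrow> (x, y) \<in> ord j)
      \<and> (\<forall>x\<in>A j. \<forall>y\<in>A j. (x, y) \<in> ord (Suc j) \<longleftrightarrow> (x, y) \<in> ord j)"
  shows "real m \<le> real n ^ 3 / \<delta>^2"
proof -
  define F where "F = f {estar}"
  have npos: "n > 0" using finG cardG estar_in card_gt_0_iff by blast
  have dpos: "\<delta> > 0" unfolding delta_def using eps by (simp add: add_pos_nonneg)
  have apos: "\<alpha> > 0" unfolding alpha_def using npos dpos f_init_pos by simp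
  have gain_nonneg: "f (insert s X) - f X \<ge> 0" if "s \<in> G" "X \<subseteq> G" for s X
  proof -
    have "f X \<le> f (insert s X)" using f_mono that unfolding monotone_set_fun_def
      by (meson insert_subset subset_insertI)
    then show ?thesis by simp
  qed
  have gain_sub: "f (insert s Y) - f Y \<le> f (insert s X) - f X"
    if "X \<subseteq> Y" "Y \<subseteq> G" "s \<in> G" "s \<notin> Y" for s X Y
    using f_sub that unfolding submodular_def by auto
  define cw where "cw j s = \<lfloor>(f (insert s (pred_in (ord j) (S j) s)) - f (pred_in (ord j) (S j) s)) / \<alpha>\<rfloor>" for j s
  define P where "P j = (\<Sum>s\<in>S j. (cw j s)^2)" for j
  have SG: "S j \<subseteq> G" if "j \<le> m" for j
    using that
  proof (induction j)
    case 0 then show ?case using S0 estar_in by simp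
  next
    case (Suc j)
    then have "j < m" by simp
    with steps have "k_replacement G \<I> k (S j) (A j) (B j)" "S (Suc j) = (S j - B j) \<union> A j" by auto
    then show ?case using Suc by (auto simp: k_replacement_def)
  qed
  have stepP: "P (Suc j) \<ge> P j + 1" if jm: "j < m" for j
  proof -
    from steps jm have kr: "k_replacement G \<I> k (S j) (A j) (B j)"
      and ineq: "(\<Sum>a\<in>A j. (wt_repl f \<alpha> (ord j) (S j) (A j) (B j) a)^2)
          > (\<Sum>b\<in>B j. (wt f \<alpha> (ord j) (S j) b)^2)"
      and Sx: "S (Suc j) = (S j - B j) \<union> A j"
      and lo: "linear_order_on G (ord (Suc j))"
      and o1: "\<forall>x\<in>S j - B j. \<forall>y\<in>A j. (x, y) \<in> ord (Suc j)"
      and o2: "\<forall>x\<in>S j - B j. \<forall>y\<in>S j - B j. (x, y) \<in> ord (Suc j) \<longleftrightarrow> (x, y) \<in> ord j"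
      and o3: "\<forall>x\<in>A j. \<forall>y\<in>A j. (x, y) \<in> ord (Suc j) \<longleftrightarrow> (x, y) \<in> ord j"
      by auto
    define R where "R = S j - B j"
    have SjG: "S j \<subseteq> G" using SG[of j] jm by simp
    have BS: "B j \<subseteq> S j" and AG: "A j \<subseteq> G - R" using kr by (auto simp: k_replacement_def R_def)
    have finS: "finite (S j)" using SjG finG finite_subset by blast
    have finA: "finite (A j)" using AG finG finite_subset by blast
    have finR: "finite R" using finS R_def by simp
    have finB: "finite (B j)" using BS finS finite_subset by blast
    have disj: "R \<inter> A j = {}" using AG by auto
    have antis: "antisym (ord (Suc j))" using lo
      by (simp add: linear_order_on_def partial_order_on_def)
    have S1: "S (Suc j) = R \<union> A j" using Sx R_def by simp
    have predR: "pred_in (ord (Suc j)) (S (Suc j)) x = pred_in (ord j) R x" if "x \<in> R" for x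
    proof -
      { fix t assume t: "t \<in> A j" "(t, x) \<in> ord (Suc j)" "t \<noteq> x"
        have "(x, t) \<in> ord (Suc j)" using o1 that t R_def by auto
        with t antis have False by (auto dest: antisymD) }
      then show ?thesis using that o2 unfolding S1 pred_in_def R_def by blast
    qed
    have predA: "pred_in (ord (Suc j)) (S (Suc j)) a = R \<union> pred_in (ord j) (A j) a" if "a \<in> A j" for a
    proof -
      have "a \<notin> R" using that disj by auto
      have "\<forall>t\<in>R. (t, a) \<in> ord (Suc j)" using o1 that R_def by auto
      then show ?thesis using that o3 \<open>a \<notin> R\<close> unfolding S1 pred_in_def by blast
    qed
    define cr where "cr a = \<lfloor>(f (insert a ((S j - B j) \<union> pred_in (ord j) (A j) a)) - f ((S j - B j) \<union> pred_in (ord j) (A j) a)) / \<alpha>\<rfloor>" for a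
    have eqA: "cw (Suc j) a = cr a" if "a \<in> A j" for a
      using predA[OF that] unfolding cw_def cr_def R_def by simp
    have geR: "(cw j x)^2 \<le> (cw (Suc j) x)^2" if x: "x \<in> R" for x
    proof -
      have xG: "x \<in> G" and xS: "x \<in> S j" using x SjG R_def by auto
      have sub1: "pred_in (ord j) R x \<subseteq> pred_in (ord j) (S j) x" unfolding pred_in_def R_def by auto
      have sub2: "pred_in (ord j) (S j) x \<subseteq> G" using pred_sub[of "ord j" "S j" x] SjG by (rule order_trans)
      have "f (insert x (pred_in (ord j) (S j) x)) - f (pred_in (ord j) (S j) x)
          \<le> f (insert x (pred_in (ord j) R x)) - f (pred_in (ord j) R x)"
        by (rule gain_sub[OF sub1 sub2 xG pred_notin])
      moreover have "0 \<le> f (insert x (pred_in (ord j) (S j) x)) - f (pred_in (ord j) (S j) x)"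
        using gain_nonneg xG sub2 by blast
      ultimately show ?thesis unfolding cw_def predR[OF x] using floor_sq_mono apos by blast
    qed
    have ineq2: "(\<Sum>a\<in>A j. (cr a)^2) > (\<Sum>b\<in>B j. (cw j b)^2)"
    proof -
      have "(\<Sum>a\<in>A j. (wt_repl f \<alpha> (ord j) (S j) (A j) (B j) a)^2) = \<alpha>^2 * of_int (\<Sum>a\<in>A j. (cr a)^2)"
        unfolding wt_repl_def cr_def by (simp add: sum_distrib_left power_mult_distrib algebra_simps)
      moreover have "(\<Sum>b\<in>B j. (wt f \<alpha> (ord j) (S j) b)^2) = \<alpha>^2 * of_int (\<Sum>b\<in>B j. (cw j b)^2)"
        unfolding wt_def cw_def by (simp add: sum_distrib_left power_mult_distrib algebra_simps)
      ultimately have "\<alpha>^2 * of_int (\<Sum>b\<in>B j. (cw j b)^2) < \<alpha>^2 * of_int (\<Sum>a\<in>A j. (cr a)^2)"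
        using ineq by simp
      then have "real_of_int (\<Sum>b\<in>B j. (cw j b)^2) < of_int (\<Sum>a\<in>A j. (cr a)^2)"
        using apos by (simp add: mult_less_cancel_left)
      then show ?thesis by linarith
    qed
    have "P j = (\<Sum>s\<in>R. (cw j s)^2) + (\<Sum>s\<in>B j. (cw j s)^2)"
    proof -
      have "S j = R \<union> B j" "R \<inter> B j = {}" using BS R_def by auto
      then show ?thesis unfolding P_def using finR finB by (simp add: sum.union_disjoint)
    qed
    moreover have "P (Suc j) = (\<Sum>s\<in>R. (cw (Suc j) s)^2) + (\<Sum>s\<in>A j. (cw (Suc j) s)^2)"
      unfolding P_def S1 using finR finA disj by (simp add: sum.union_disjoint)
    moreover have "(\<Sum>s\<in>R. (cw j s)^2) \<le> (\<Sum>s\<in>R. (cw (Suc j) s)^2)"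
      using geR by (rule sum_mono)
    moreover have "(\<Sum>s\<in>A j. (cw (Suc j) s)^2) = (\<Sum>a\<in>A j. (cr a)^2)"
      using eqA by simp
    ultimately show ?thesis using ineq2 by linarith
  qed
  have Pj: "P j \<ge> int j" if "j \<le> m" for j
    using that
  proof (induction j)
    case 0 then show ?case unfolding P_def by (simp add: sum_nonneg)
  next
    case (Suc j)
    then show ?case using stepP[of j] by simp
  qed
  have FA: "F / \<alpha> = real n / \<delta>"
  proof -
    have "real n / \<delta> * \<alpha> = F" unfolding alpha_def F_def using npos dpos by simp
    then have "F / \<alpha> = (real n / \<delta> * \<alpha>) / \<alpha>" by simp
    also have "\<dots> = real n / \<delta>" using apos by simp
    finally show ?thesis .
  qed
  have bnd: "real_of_int ((cw m s)^2) \<le> (F / \<alpha>)^2" if s: "s \<in> S m" for s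
  proof -
    have SmG: "S m \<subseteq> G" using SG[of m] by simp
    have sG: "s \<in> G" using s SmG by blast
    have pG: "pred_in (ord m) (S m) s \<subseteq> G" using pred_sub[of "ord m" "S m" s] SmG by (rule order_trans)
    have g0: "0 \<le> f (insert s (pred_in (ord m) (S m) s)) - f (pred_in (ord m) (S m) s)"
      using gain_nonneg sG pG by blast
    have "f (insert s (pred_in (ord m) (S m) s)) - f (pred_in (ord m) (S m) s) \<le> f (insert s {}) - f {}"
      by (rule gain_sub[OF _ pG sG pred_notin]) simp
    moreover have "f {} \<ge> 0" using f_nonneg by simp
    moreover have "f {s} \<le> F" using estar_max sG F_def by simp
    ultimately have gF: "f (insert s (pred_in (ord m) (S m) s)) - f (pred_in (ord m) (S m) s) \<le> F" by simp
    define g where "g = f (insert s (pred_in (ord m) (S m) s)) - f (pred_in (ord m) (S m) s)"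
    have c0: "0 \<le> cw m s" unfolding cw_def using g0 apos by simp
    have "real_of_int (cw m s) \<le> g / \<alpha>" unfolding cw_def g_def by simp
    also have "\<dots> \<le> F / \<alpha>" using gF apos unfolding g_def by (simp add: divide_right_mono)
    finally have "real_of_int (cw m s) \<le> F / \<alpha>" .
    then show ?thesis using c0 by (simp add: power_mono)
  qed
  have finSm: "finite (S m)" using SG[of m] finG finite_subset by blast
  have cardSm: "card (S m) \<le> n" using SG[of m] finG cardG card_mono by blast
  have "real m \<le> real_of_int (P m)" using Pj[of m] by simp
  also have "\<dots> = (\<Sum>s\<in>S m. real_of_int ((cw m s)^2))" unfolding P_def by simp
  also have "\<dots> \<le> (\<Sum>s\<in>S m. (F / \<alpha>)^2)" using bnd by (rule sum_mono)
  also have "\<dots> = real (card (S m)) * (F / \<alpha>)^2" by simp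
  also have "\<dots> \<le> real n * (F / \<alpha>)^2" using cardSm by (simp add: mult_right_mono)
  also have "\<dots> = real n ^ 3 / \<delta>^2" unfolding FA by (simp add: power_divide power3_eq_cube power2_eq_square)
  finally show ?thesis .
qed

end
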